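(* Let $\rho$ be a state of $A$ and $\sigma$ a state of $B$ (with $d_R=d_B$). If there exists a family of $G$-covariant channels $\{\mathcal{E}^\eta\}$ from $A$ to $B$, parametrized by the states $\eta$ on $\mathcal{H}_R$, such that $\langle\eta,\mathcal{E}^\eta(\rho)\rangle\ge\langle\eta,\sigma\rangle$ for all states $\eta$, then there exists a $G$-covariant channel from $A$ to $B$ mapping $\rho$ to $\sigma$. Here $\langle X,Y\rangle=\mathrm{tr}[X^\dagger Y]$.
   Context: $G$ is a compact group; finite-dimensional systems $A,B$ carry continuous unitary representations $U_A,U_B$, and $\mathcal{H}_R$ is a Hilbert space of the same dimension as $\mathcal{H}_B$, identified with it via a fixed basis. A channel $\mathcal{E}$ from $A$ to $B$ is $G$-covariant if $\mathcal{E}(U_A(g)XU_A(g)^\dagger)=U_B(g)\mathcal{E}(X)U_B(g)^\dagger$ for all $g,X$. *)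

theory Defs
  imports "Jordan_Normal_Form.Matrix" "HOL-Algebra.Group" "HOL-Analysis.Product_Topology" "HOL-Analysis.T1_Spaces"
begin

definition mtrace :: "complex mat \<Rightarrow> complex" where
  "mtrace A = (\<Sum>i<dim_row A. A $$ (i, i))"

definition adj :: "complex mat \<Rightarrow> complex mat" where
  "adj A = mat (dim_col A) (dim_row A) (\<lambda>(i, j). cnj (A $$ (j, i)))"

definition hs_inner :: "complex mat \<Rightarrow> complex mat \<Rightarrow> complex" where
  "hs_inner X Y = mtrace (adj X * Y)"

definition psd :: "nat \<Rightarrow> complex mat \<Rightarrow> bool" where
  "psd n A \<longleftrightarrow> A \<in> carrier_mat n n \<and>
     (\<forall>v \<in> carrier_vec n. Im ((A *\<^sub>v v) \<bullet>c v) = 0 \<and> Re ((A *\<^sub>v v) \<bullet>c v) \<ge> 0)"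

definition is_state :: "nat \<Rightarrow> complex mat \<Rightarrow> bool" where
  "is_state n \<rho> \<longleftrightarrow> psd n \<rho> \<and> mtrace \<rho> = 1"

definition unitary_mat :: "nat \<Rightarrow> complex mat \<Rightarrow> bool" where
  "unitary_mat n U \<longleftrightarrow> U \<in> carrier_mat n n \<and> adj U * U = 1\<^sub>m n \<and> U * adj U = 1\<^sub>m n"

definition linear_map_mat :: "nat \<Rightarrow> nat \<Rightarrow> (complex mat \<Rightarrow> complex mat) \<Rightarrow> bool" where
  "linear_map_mat d1 d2 E \<longleftrightarrow>
     (\<forall>X \<in> carrier_mat d1 d1. E X \<in> carrier_mat d2 d2) \<and>
     (\<forall>X \<in> carrier_mat d1 d1. \<forall>Y \<in> carrier_mat d1 d1. E (X + Y) = E X + E Y) \<and>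
     (\<forall>c. \<forall>X \<in> carrier_mat d1 d1. E (c \<cdot>\<^sub>m X) = c \<cdot>\<^sub>m E X)"

text \<open>The (k,l) block of size d x d of a matrix on C^n (x) C^d, with basis index k*d + r.\<close>
definition block_of :: "nat \<Rightarrow> complex mat \<Rightarrow> nat \<Rightarrow> nat \<Rightarrow> complex mat" where
  "block_of d X k l = mat d d (\<lambda>(r, s). X $$ (k * d + r, l * d + s))"

text \<open>Ampliation  id_n (x) E  acting blockwise on (n*d1) x (n*d1) matrices.\<close>
definition ampliation :: "nat \<Rightarrow> nat \<Rightarrow> nat \<Rightarrow> (complex mat \<Rightarrow> complex mat) \<Rightarrow> complex mat \<Rightarrow> complex mat" where
  "ampliation n d1 d2 E X =
     mat (n * d2) (n * d2) (\<lambda>(i, j). E (block_of d1 X (i div d2) (j div d2)) $$ (i mod d2, j mod d2))"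

definition completely_positive :: "nat \<Rightarrow> nat \<Rightarrow> (complex mat \<Rightarrow> complex mat) \<Rightarrow> bool" where
  "completely_positive d1 d2 E \<longleftrightarrow>
     (\<forall>n. \<forall>X. psd (n * d1) X \<longrightarrow> psd (n * d2) (ampliation n d1 d2 E X))"

definition trace_preserving :: "nat \<Rightarrow> (complex mat \<Rightarrow> complex mat) \<Rightarrow> bool" where
  "trace_preserving d1 E \<longleftrightarrow> (\<forall>X \<in> carrier_mat d1 d1. mtrace (E X) = mtrace X)"

definition is_channel :: "nat \<Rightarrow> nat \<Rightarrow> (complex mat \<Rightarrow> complex mat) \<Rightarrow> bool" where
  "is_channel d1 d2 E \<longleftrightarrow>
     linear_map_mat d1 d2 E \<and> completely_positive d1 d2 E \<and> trace_preserving d1 E"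

definition compact_group :: "('g, 'b) monoid_scheme \<Rightarrow> 'g topology \<Rightarrow> bool" where
  "compact_group G T \<longleftrightarrow> group G \<and> topspace T = carrier G \<and> compact_space T \<and> Hausdorff_space T \<and>
     continuous_map (prod_topology T T) T (\<lambda>(g, h). g \<otimes>\<^bsub>G\<^esub> h) \<and>
     continuous_map T T (\<lambda>g. inv\<^bsub>G\<^esub> g)"

definition cont_unitary_rep :: "('g, 'b) monoid_scheme \<Rightarrow> 'g topology \<Rightarrow> nat \<Rightarrow> ('g \<Rightarrow> complex mat) \<Rightarrow> bool" where
  "cont_unitary_rep G T d U \<longleftrightarrow>
     (\<forall>g \<in> carrier G. unitary_mat d (U g)) \<and>
     (\<forall>g \<in> carrier G. \<forall>h \<in> carrier G. U (g \<otimes>\<^bsub>G\<^esub> h) = U g * U h) \<and>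
     (\<forall>i < d. \<forall>j < d. continuous_map T euclidean (\<lambda>g. U g $$ (i, j)))"

definition covariant :: "('g, 'b) monoid_scheme \<Rightarrow> nat \<Rightarrow> ('g \<Rightarrow> complex mat) \<Rightarrow> ('g \<Rightarrow> complex mat)
    \<Rightarrow> (complex mat \<Rightarrow> complex mat) \<Rightarrow> bool" where
  "covariant G dA UA UB E \<longleftrightarrow>
     (\<forall>g \<in> carrier G. \<forall>X \<in> carrier_mat dA dA.
        E (UA g * X * adj (UA g)) = UB g * E X * adj (UB g))"

end

theory Submission imports Defs begin

lemma qform:
  assumes "A \<in> carrier_mat n n" "v \<in> carrier_vec n"
  shows "(A *\<^sub>v v) \<bullet>c v = (\<Sum>i<n. \<Sum>j<n. A $$ (i,j) * v $ j * cnj (v $ i))"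
  using assms
  by (auto simp: scalar_prod_def mult_mat_vec_def row_def sum_distrib_right atLeast0LessThan
      intro!: sum.cong)

definition eunit :: "nat \<Rightarrow> nat \<Rightarrow> nat \<Rightarrow> complex mat" where
  "eunit d k l = mat d d (\<lambda>(r,s). if r = k \<and> s = l then 1 else 0)"

fun msum :: "nat \<Rightarrow> ('i \<Rightarrow> complex mat) \<Rightarrow> 'i list \<Rightarrow> complex mat" where
  "msum d f [] = 0\<^sub>m d d"
| "msum d f (x # xs) = f x + msum d f xs"

lemma msum_carrier: "(\<And>x. x \<in> set xs \<Longrightarrow> f x \<in> carrier_mat d d) \<Longrightarrow> msum d f xs \<in> carrier_mat d d"
  by (induction xs) auto

lemma msum_index: "(\<And>x. x \<in> set xs \<Longrightarrow> f x \<in> carrier_mat d d) \<Longrightarrow> i < d \<Longrightarrow> j < d \<Longrightarrow>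
   msum d f xs $$ (i,j) = (\<Sum>x\<leftarrow>xs. f x $$ (i,j))"
proof (induction xs)
  case Nil then show ?case by simp
next
  case (Cons a xs)
  have "msum d f xs \<in> carrier_mat d d" using Cons.prems by (intro msum_carrier) auto
  moreover have "f a \<in> carrier_mat d d" using Cons.prems by auto
  ultimately show ?case using Cons by auto
qed

lemma lin_zero:
  assumes "linear_map_mat d1 d2 E"
  shows "E (0\<^sub>m d1 d1) = 0\<^sub>m d2 d2"
proof -
  have c: "E (0\<^sub>m d1 d1) \<in> carrier_mat d2 d2" using assms unfolding linear_map_mat_def by auto
  have "E (0\<^sub>m d1 d1) = E (0 \<cdot>\<^sub>m 0\<^sub>m d1 d1)" by simp
  also have "\<dots> = 0 \<cdot>\<^sub>m E (0\<^sub>m d1 d1)" using assms zero_carrier_mat[of d1 d1] unfolding linear_map_mat_def by blast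
  also have "\<dots> = 0\<^sub>m d2 d2" using c by (intro eq_matI) auto
  finally show ?thesis .
qed

lemma lin_msum:
  assumes "linear_map_mat d1 d2 E" "\<And>x. x \<in> set xs \<Longrightarrow> f x \<in> carrier_mat d1 d1"
  shows "E (msum d1 f xs) = msum d2 (\<lambda>x. E (f x)) xs"
  using assms(2)
proof (induction xs)
  case Nil then show ?case using lin_zero[OF assms(1)] by simp
next
  case (Cons a xs)
  have "msum d1 f xs \<in> carrier_mat d1 d1" using Cons.prems by (intro msum_carrier) auto
  then show ?case using Cons assms(1) unfolding linear_map_mat_def by auto
qed

lemma mat_decomp:
  assumes "X \<in> carrier_mat d d"
  shows "X = msum d (\<lambda>(k,l). X $$ (k,l) \<cdot>\<^sub>m eunit d k l) (List.product [0..<d] [0..<d])"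
proof -
  define F where "F = (\<lambda>(k,l). X $$ (k,l) \<cdot>\<^sub>m eunit d k l)"
  have car: "\<And>x. F x \<in> carrier_mat d d"
    by (auto simp: eunit_def F_def)
  have mc: "msum d F (List.product [0..<d] [0..<d]) \<in> carrier_mat d d" by (rule msum_carrier[OF car])
  have "X = msum d F (List.product [0..<d] [0..<d])"
  proof (rule eq_matI)
    show "dim_row X = dim_row (msum d F (List.product [0..<d] [0..<d]))" using mc assms by auto
    show "dim_col X = dim_col (msum d F (List.product [0..<d] [0..<d]))" using mc assms by auto
    fix i j assume "i < dim_row (msum d F (List.product [0..<d] [0..<d]))" "j < dim_col (msum d F (List.product [0..<d] [0..<d]))"
    then have i: "i < d" and j: "j < d" using mc by auto
    have "msum d F (List.product [0..<d] [0..<d]) $$ (i,j) = (\<Sum>x\<leftarrow>List.product [0..<d] [0..<d]. F x $$ (i,j))"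
      by (rule msum_index[OF car i j])
    also have "\<dots> = (\<Sum>x\<in>{0..<d}\<times>{0..<d}. F x $$ (i,j))"
      by (subst sum_list_distinct_conv_sum_set) (auto simp: distinct_product)
    also have "\<dots> = (\<Sum>x\<in>{0..<d}\<times>{0..<d}. if x = (i,j) then X $$ (i,j) else 0)"
      using i j by (intro sum.cong) (auto simp: eunit_def F_def split: if_splits)
    also have "\<dots> = X $$ (i,j)" using i j by simp
    finally show "X $$ (i,j) = msum d F (List.product [0..<d] [0..<d]) $$ (i,j)" by simp
  qed
  then show ?thesis unfolding F_def .
qed

lemma lin_repr:
  assumes "linear_map_mat d1 d2 E" "X \<in> carrier_mat d1 d1" "a < d2" "b < d2"
  shows "E X $$ (a,b) = (\<Sum>(k,l)\<in>{0..<d1}\<times>{0..<d1}. X $$ (k,l) * E (eunit d1 k l) $$ (a,b))"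
proof -
  define F where "F = (\<lambda>(k,l). X $$ (k,l) \<cdot>\<^sub>m eunit d1 k l)"
  have eu: "\<And>k l. eunit d1 k l \<in> carrier_mat d1 d1" by (auto simp: eunit_def)
  have car: "\<And>x. F x \<in> carrier_mat d1 d1"
    by (auto simp: eunit_def F_def)
  have car2: "\<And>x. E (F x) \<in> carrier_mat d2 d2"
    using assms(1) car unfolding linear_map_mat_def by blast
  have "E X = msum d2 (\<lambda>x. E (F x)) (List.product [0..<d1] [0..<d1])"
    unfolding F_def by (subst mat_decomp[OF assms(2)]) (rule lin_msum[OF assms(1) car[unfolded F_def]])
  then have "E X $$ (a,b) = (\<Sum>x\<leftarrow>List.product [0..<d1] [0..<d1]. E (F x) $$ (a,b))"
    using msum_index[of _ "\<lambda>x. E (F x)", OF car2 assms(3,4)] by simp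
  also have "\<dots> = (\<Sum>x\<in>{0..<d1}\<times>{0..<d1}. E (F x) $$ (a,b))"
    by (subst sum_list_distinct_conv_sum_set) (auto simp: distinct_product)
  also have "\<dots> = (\<Sum>(k,l)\<in>{0..<d1}\<times>{0..<d1}. X $$ (k,l) * E (eunit d1 k l) $$ (a,b))"
  proof (intro sum.cong refl, clarify)
    fix k l
    have "E (X $$ (k,l) \<cdot>\<^sub>m eunit d1 k l) = X $$ (k,l) \<cdot>\<^sub>m E (eunit d1 k l)"
      using assms(1) eu unfolding linear_map_mat_def by blast
    moreover have "E (eunit d1 k l) \<in> carrier_mat d2 d2" using assms(1) eu unfolding linear_map_mat_def by blast
    ultimately show "E (F (k,l)) $$ (a,b) = X $$ (k,l) * E (eunit d1 k l) $$ (a,b)"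
      using assms(3,4) by (simp add: F_def)
  qed
  finally show ?thesis .
qed


lemma sum2:
  fixes f g :: "nat \<Rightarrow> complex"
  assumes "a < n" "b < n"
  shows "(\<Sum>j<n. f j * ((if j = a then x else 0) + (if j = b then y else 0))) = f a * x + f b * y"
proof -
  have "(\<Sum>j<n. f j * ((if j = a then x else 0) + (if j = b then y else 0)))
     = (\<Sum>j<n. (if j = a then f j * x else 0) + (if j = b then f j * y else 0))"
    by (intro sum.cong) (auto simp: distrib_left)
  also have "\<dots> = f a * x + f b * y" using assms by (simp add: sum.distrib)
  finally show ?thesis .
qed

lemma q2:
  fixes P :: "complex mat"
  assumes P: "P \<in> carrier_mat n n" and ab: "a < n" "b < n" "a \<noteq> b"
  shows "(P *\<^sub>v vec n (\<lambda>i. if i = a then x else if i = b then y else 0)) \<bullet>c vec n (\<lambda>i. if i = a then x else if i = b then y else 0)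
    = P $$ (a,a) * x * cnj x + P $$ (a,b) * y * cnj x + P $$ (b,a) * x * cnj y + P $$ (b,b) * y * cnj y"
proof -
  have v: "\<And>j. j < n \<Longrightarrow> vec n (\<lambda>i. if i = a then x else if i = b then y else 0) $ j = (if j = a then x else 0) + (if j = b then y else 0)"
    using ab by auto
  have "(P *\<^sub>v vec n (\<lambda>i. if i = a then x else if i = b then y else 0)) \<bullet>c vec n (\<lambda>i. if i = a then x else if i = b then y else 0)
     = (\<Sum>i<n. \<Sum>j<n. P $$ (i,j) * ((if j = a then x else 0) + (if j = b then y else 0)) * cnj ((if i = a then x else 0) + (if i = b then y else 0)))"
    using ab by (subst qform[OF P]) (auto simp: v intro!: sum.cong)
  also have "\<dots> = (\<Sum>i<n. (P $$ (i,a) * x + P $$ (i,b) * y) * cnj ((if i = a then x else 0) + (if i = b then y else 0)))"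
    by (intro sum.cong refl, subst sum_distrib_right[symmetric], rule arg_cong[where f="\<lambda>z. z * _"], rule sum2[OF ab(1,2)])
  also have "\<dots> = (\<Sum>i<n. (P $$ (i,a) * x + P $$ (i,b) * y) * ((if i = a then cnj x else 0) + (if i = b then cnj y else 0)))"
    by (intro sum.cong) auto
  also have "\<dots> = (P $$ (a,a) * x + P $$ (a,b) * y) * cnj x + (P $$ (b,a) * x + P $$ (b,b) * y) * cnj y"
    by (rule sum2[OF ab(1,2)])
  finally show ?thesis by (simp add: algebra_simps)
qed

lemma q1:
  fixes P :: "complex mat"
  assumes P: "P \<in> carrier_mat n n" and a: "a < n"
  shows "(P *\<^sub>v vec n (\<lambda>i. if i = a then 1 else 0)) \<bullet>c vec n (\<lambda>i. if i = a then 1 else 0) = P $$ (a,a)"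
proof -
  have "(P *\<^sub>v vec n (\<lambda>i. if i = a then 1 else 0)) \<bullet>c vec n (\<lambda>i. if i = a then 1 else 0)
     = (\<Sum>i<n. \<Sum>j<n. if i = a then (if j = a then P $$ (a,a) else 0) else 0)"
    by (subst qform[OF P]) (auto intro!: sum.cong)
  also have "\<dots> = (\<Sum>i<n. if i = a then (\<Sum>j<n. if j = a then P $$ (a,a) else 0) else 0)"
    by (intro sum.cong) auto
  also have "\<dots> = P $$ (a,a)" using a by simp
  finally show ?thesis .
qed

lemma psdD: "psd n P \<Longrightarrow> v \<in> carrier_vec n \<Longrightarrow> Im ((P *\<^sub>v v) \<bullet>c v) = 0 \<and> Re ((P *\<^sub>v v) \<bullet>c v) \<ge> 0"
  unfolding psd_def by blast

lemma psd_carrier: "psd n P \<Longrightarrow> P \<in> carrier_mat n n"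
  unfolding psd_def by blast

lemma psd_diag:
  assumes "psd n P" "a < n"
  shows "Im (P $$ (a,a)) = 0" "Re (P $$ (a,a)) \<ge> 0"
  using psdD[OF assms(1) vec_carrier[of n "\<lambda>i. if i = a then 1 else 0"]] q1[OF psd_carrier[OF assms(1)] assms(2)] by auto

lemma psd_entry_bound:
  assumes ps: "psd n P" and ab: "a < n" "b < n"
  shows "cmod (P $$ (a,b)) \<le> Re (P $$ (a,a)) + Re (P $$ (b,b))"
proof (cases "a = b")
  case True
  then show ?thesis using psd_diag[OF ps ab(1)] by (simp add: cmod_eq_Re)
next
  case False
  have P: "P \<in> carrier_mat n n" using ps unfolding psd_def by auto
  have Q: "\<And>w. Im (P $$ (a,a) + P $$ (a,b) * w + P $$ (b,a) * cnj w + P $$ (b,b) * w * cnj w) = 0 \<and>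
     Re (P $$ (a,a) + P $$ (a,b) * w + P $$ (b,a) * cnj w + P $$ (b,b) * w * cnj w) \<ge> 0"
  proof -
    fix w
    have "(P *\<^sub>v vec n (\<lambda>i. if i = a then 1 else if i = b then w else 0)) \<bullet>c vec n (\<lambda>i. if i = a then 1 else if i = b then w else 0)
      = P $$ (a,a) + P $$ (a,b) * w + P $$ (b,a) * cnj w + P $$ (b,b) * w * cnj w"
      using q2[OF P ab False, of 1 w] by simp
    then show "?thesis w" using psdD[OF ps vec_carrier[of n "\<lambda>i. if i = a then 1 else if i = b then w else 0"]] by simp
  qed
  have d1: "Im (P $$ (a,a)) = 0" "Im (P $$ (b,b)) = 0" using psd_diag[OF ps] ab by auto
  have e1: "Im (P $$ (a,a) + P $$ (a,b) + P $$ (b,a) + P $$ (b,b)) = 0 \<and> Re (P $$ (a,a) + P $$ (a,b) + P $$ (b,a) + P $$ (b,b)) \<ge> 0"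
    using Q[of 1] by simp
  have e2: "Im (P $$ (a,a) - P $$ (a,b) - P $$ (b,a) + P $$ (b,b)) = 0 \<and> Re (P $$ (a,a) - P $$ (a,b) - P $$ (b,a) + P $$ (b,b)) \<ge> 0"
    using Q[of "-1"] by simp
  have e3: "Im (P $$ (a,a) + P $$ (a,b) * \<i> - P $$ (b,a) * \<i> + P $$ (b,b)) = 0 \<and> Re (P $$ (a,a) + P $$ (a,b) * \<i> - P $$ (b,a) * \<i> + P $$ (b,b)) \<ge> 0"
    using Q[of "\<i>"] by simp
  have e4: "Im (P $$ (a,a) - P $$ (a,b) * \<i> + P $$ (b,a) * \<i> + P $$ (b,b)) = 0 \<and> Re (P $$ (a,a) - P $$ (a,b) * \<i> + P $$ (b,a) * \<i> + P $$ (b,b)) \<ge> 0"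
    using Q[of "-\<i>"] by simp
  have "cmod (P $$ (a,b)) \<le> \<bar>Re (P $$ (a,b))\<bar> + \<bar>Im (P $$ (a,b))\<bar>" by (rule cmod_le)
  moreover have "\<bar>Re (P $$ (a,b))\<bar> + \<bar>Im (P $$ (a,b))\<bar> \<le> Re (P $$ (a,a)) + Re (P $$ (b,b))"
    using e1 e2 e3 e4 d1 by (simp add: abs_le_iff; linarith)
  ultimately show ?thesis by linarith
qed


lemma qf_comb:
  fixes A B :: "complex mat"
  assumes "A \<in> carrier_mat n n" "B \<in> carrier_mat n n" "v \<in> carrier_vec n"
  shows "((\<alpha> \<cdot>\<^sub>m A + \<beta> \<cdot>\<^sub>m B) *\<^sub>v v) \<bullet>c v = \<alpha> * ((A *\<^sub>v v) \<bullet>c v) + \<beta> * ((B *\<^sub>v v) \<bullet>c v)"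
proof -
  have C: "\<alpha> \<cdot>\<^sub>m A + \<beta> \<cdot>\<^sub>m B \<in> carrier_mat n n" using assms by auto
  show ?thesis
    unfolding qform[OF C assms(3)] qform[OF assms(1,3)] qform[OF assms(2,3)]
    using assms by (simp add: sum_distrib_left sum.distrib[symmetric] algebra_simps)
qed

lemma psd_comb:
  assumes "psd n A" "psd n B" "\<alpha> \<ge> 0" "\<beta> \<ge> 0"
  shows "psd n (complex_of_real \<alpha> \<cdot>\<^sub>m A + complex_of_real \<beta> \<cdot>\<^sub>m B)"
proof -
  have A: "A \<in> carrier_mat n n" and B: "B \<in> carrier_mat n n" using assms psd_carrier by auto
  show ?thesis unfolding psd_def
  proof (intro conjI ballI)
    show "complex_of_real \<alpha> \<cdot>\<^sub>m A + complex_of_real \<beta> \<cdot>\<^sub>m B \<in> carrier_mat n n" using A B by auto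
    fix v :: "complex vec" assume v: "v \<in> carrier_vec n"
    note e = qf_comb[OF A B v, of "complex_of_real \<alpha>" "complex_of_real \<beta>"]
    show "Im (((complex_of_real \<alpha> \<cdot>\<^sub>m A + complex_of_real \<beta> \<cdot>\<^sub>m B) *\<^sub>v v) \<bullet>c v) = 0"
      unfolding e using psdD[OF assms(1) v] psdD[OF assms(2) v] by simp
    show "Re (((complex_of_real \<alpha> \<cdot>\<^sub>m A + complex_of_real \<beta> \<cdot>\<^sub>m B) *\<^sub>v v) \<bullet>c v) \<ge> 0"
      unfolding e using psdD[OF assms(1) v] psdD[OF assms(2) v] assms(3,4) by simp
  qed
qed

lemma psd_limit:
  assumes ps: "\<And>k. psd n (A k)" and A': "A' \<in> carrier_mat n n"
    and lim: "\<And>i j. i < n \<Longrightarrow> j < n \<Longrightarrow> (\<lambda>k. A k $$ (i,j)) \<longlonglongrightarrow> A' $$ (i,j)"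
  shows "psd n A'"
  unfolding psd_def
proof (intro conjI ballI A')
  fix v :: "complex vec" assume v: "v \<in> carrier_vec n"
  have "(\<lambda>k. (A k *\<^sub>v v) \<bullet>c v) \<longlonglongrightarrow> (A' *\<^sub>v v) \<bullet>c v"
    unfolding qform[OF psd_carrier[OF ps] v] qform[OF A' v]
    by (intro tendsto_sum tendsto_mult lim tendsto_const) auto
  then have l1: "(\<lambda>k. Im ((A k *\<^sub>v v) \<bullet>c v)) \<longlonglongrightarrow> Im ((A' *\<^sub>v v) \<bullet>c v)"
    and l2: "(\<lambda>k. Re ((A k *\<^sub>v v) \<bullet>c v)) \<longlonglongrightarrow> Re ((A' *\<^sub>v v) \<bullet>c v)"
    by (auto intro: tendsto_Im tendsto_Re)
  have "(\<lambda>k. Im ((A k *\<^sub>v v) \<bullet>c v)) = (\<lambda>k. 0)" using psdD[OF ps v] by auto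
  with l1 show "Im ((A' *\<^sub>v v) \<bullet>c v) = 0" using LIMSEQ_unique tendsto_const by metis
  show "Re ((A' *\<^sub>v v) \<bullet>c v) \<ge> 0"
    by (rule LIMSEQ_le_const[OF l2]) (use psdD[OF ps v] in auto)
qed

lemma block_of_00: "X \<in> carrier_mat d d \<Longrightarrow> block_of d X 0 0 = X"
  unfolding block_of_def by (intro eq_matI) auto

lemma ampl1:
  assumes "X \<in> carrier_mat d1 d1" "E X \<in> carrier_mat d2 d2"
  shows "ampliation 1 d1 d2 E X = E X"
  unfolding ampliation_def using assms by (intro eq_matI) (auto simp: block_of_00)

lemma chan_pos:
  assumes "is_channel d1 d2 E" "psd d1 X"
  shows "psd d2 (E X)"
proof -
  have X: "X \<in> carrier_mat d1 d1" using psd_carrier[OF assms(2)] .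
  have EX: "E X \<in> carrier_mat d2 d2" using assms(1) X unfolding is_channel_def linear_map_mat_def by blast
  have "psd (1 * d2) (ampliation 1 d1 d2 E X)"
    using assms unfolding is_channel_def completely_positive_def by (metis mult_1)
  then show ?thesis using ampl1[of X d1 E d2, OF X EX] by simp
qed


lemma idx_bound:
  fixes k a m n :: nat
  assumes "k < m" "a < n"
  shows "k*n + a < m*n"
proof -
  have "k*n + a < (k+1)*n" using assms by simp
  also have "\<dots> \<le> m*n" using assms by (intro mult_le_mono1) simp
  finally show ?thesis .
qed

lemma cnj_mult_self: "cnj z * z = complex_of_real ((cmod z)\<^sup>2)"
proof -
  have "cnj z * z = z * cnj z" by (rule mult.commute)
  also have "\<dots> = complex_of_real ((cmod z)\<^sup>2)" by (rule complex_norm_square[symmetric])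
  finally show ?thesis .
qed

definition omega :: "nat \<Rightarrow> complex mat" where
  "omega d = mat (d*d) (d*d) (\<lambda>(p,q). if p div d = p mod d \<and> q div d = q mod d then 1 else 0)"

lemma omega_psd: "psd (d*d) (omega d)"
  unfolding psd_def
proof (intro conjI ballI)
  show "omega d \<in> carrier_mat (d*d) (d*d)" by (simp add: omega_def)
  fix v :: "complex vec" assume v: "v \<in> carrier_vec (d*d)"
  define c where "c = (\<lambda>p::nat. p div d = p mod d)"
  have om: "omega d $$ (i,j) = (if c i \<and> c j then 1 else 0)" if "i < d*d" "j < d*d" for i j
    using that unfolding omega_def c_def by simp
  have "(omega d *\<^sub>v v) \<bullet>c v = (\<Sum>i<d*d. \<Sum>j<d*d. (if c i then cnj (v $ i) else 0) * (if c j then v $ j else 0))"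
    unfolding qform[OF \<open>omega d \<in> carrier_mat (d*d) (d*d)\<close> v]
    by (intro sum.cong refl) (simp add: om)
  also have "\<dots> = (\<Sum>i<d*d. (if c i then cnj (v $ i) else 0)) * (\<Sum>j<d*d. (if c j then v $ j else 0))"
    by (rule sum_product[symmetric])
  also have "\<dots> = cnj (\<Sum>j<d*d. (if c j then v $ j else 0)) * (\<Sum>j<d*d. (if c j then v $ j else 0))"
  proof -
    have "cnj (\<Sum>j<d*d. (if c j then v $ j else 0)) = (\<Sum>i<d*d. (if c i then cnj (v $ i) else 0))"
      unfolding cnj_sum by (intro sum.cong) auto
    then show ?thesis by simp
  qed
  also have "\<dots> = complex_of_real ((cmod (\<Sum>j<d*d. (if c j then v $ j else 0)))\<^sup>2)"
    by (rule cnj_mult_self)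
  finally have e: "(omega d *\<^sub>v v) \<bullet>c v = complex_of_real ((cmod (\<Sum>j<d*d. (if c j then v $ j else 0)))\<^sup>2)" .
  show "Im ((omega d *\<^sub>v v) \<bullet>c v) = 0" unfolding e by simp
  show "Re ((omega d *\<^sub>v v) \<bullet>c v) \<ge> 0" unfolding e by simp
qed

lemma block_omega:
  assumes "k < d" "l < d"
  shows "block_of d (omega d) k l = eunit d k l"
proof -
  have "\<And>r. r < d \<Longrightarrow> (k*d + r) div d = k \<and> (k*d+r) mod d = r" by simp
  moreover have "\<And>r. r < d \<Longrightarrow> (l*d + r) div d = l \<and> (l*d+r) mod d = r" by simp
  moreover have "\<And>r. r < d \<Longrightarrow> k*d + r < d*d" using assms
    by (auto intro: idx_bound)
  moreover have "\<And>r. r < d \<Longrightarrow> l*d + r < d*d" using assms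
    by (auto intro: idx_bound)
  ultimately show ?thesis
    unfolding block_of_def eunit_def omega_def by (intro eq_matI) auto
qed

lemma delta_sum: "k < (d::nat) \<Longrightarrow> (\<Sum>j<d. (if j = k then 1 else 0) * (f j :: complex)) = f k"
  by (subst sum.cong[OF refl, of _ _ "\<lambda>j. if j = k then f j else 0"]) auto

lemma eunit_psd: "k < d \<Longrightarrow> psd d (eunit d k k)"
  unfolding psd_def
proof (intro conjI ballI)
  assume k: "k < d"
  show E: "eunit d k k \<in> carrier_mat d d" by (simp add: eunit_def)
  fix v :: "complex vec" assume v: "v \<in> carrier_vec d"
  have "(eunit d k k *\<^sub>v v) \<bullet>c v = (\<Sum>i<d. if i = k then (\<Sum>j<d. if j = k then v $ k * cnj (v $ k) else 0) else 0)"
    unfolding qform[OF E v] by (intro sum.cong refl) (auto simp: eunit_def mult.assoc delta_sum)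
  also have "\<dots> = v $ k * cnj (v $ k)" using k by simp
  also have "\<dots> = complex_of_real ((cmod (v $ k))\<^sup>2)" by (rule complex_norm_square[symmetric])
  finally show "Im ((eunit d k k *\<^sub>v v) \<bullet>c v) = 0" "Re ((eunit d k k *\<^sub>v v) \<bullet>c v) \<ge> 0" by simp_all
qed

lemma mtrace_eunit: "k < d \<Longrightarrow> mtrace (eunit d k k) = 1"
  unfolding mtrace_def eunit_def by simp

lemma psd_diag_le_trace:
  assumes "psd n P" "a < n"
  shows "Re (P $$ (a,a)) \<le> Re (mtrace P)"
proof -
  have "Re (mtrace P) = (\<Sum>i<n. Re (P $$ (i,i)))"
    using psd_carrier[OF assms(1)] unfolding mtrace_def by (simp add: Re_sum)
  moreover have "Re (P $$ (a,a)) \<le> (\<Sum>i<n. Re (P $$ (i,i)))"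
    by (rule member_le_sum) (use assms psd_diag in auto)
  ultimately show ?thesis by simp
qed

lemma chan_coeff_bound:
  assumes ch: "is_channel d1 d2 E" and kl: "k < d1" "l < d1" and ab: "a < d2" "b < d2"
  shows "cmod (E (eunit d1 k l) $$ (a,b)) \<le> 2"
proof -
  have cp: "psd (d1*d2) (ampliation d1 d1 d2 E (omega d1))"
    using ch omega_psd[of d1] unfolding is_channel_def completely_positive_def by blast
  have ent: "ampliation d1 d1 d2 E (omega d1) $$ (k'*d2 + a', l'*d2 + b') = E (eunit d1 k' l') $$ (a',b')"
    if "k' < d1" "l' < d1" "a' < d2" "b' < d2" for k' l' a' b'
  proof -
    have "k'*d2 + a' < d1*d2" "l'*d2 + b' < d1*d2" using that
      by (auto intro: idx_bound)
    then show ?thesis using that unfolding ampliation_def by (simp add: block_omega)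
  qed
  have ib: "k*d2 + a < d1*d2" "l*d2 + b < d1*d2" using kl ab
      by (auto intro: idx_bound)
  have diag: "Re (E (eunit d1 m m) $$ (c,c)) \<le> 1" if "m < d1" "c < d2" for m c
  proof -
    have "psd d2 (E (eunit d1 m m))" by (rule chan_pos[OF ch eunit_psd[OF that(1)]])
    moreover have "mtrace (E (eunit d1 m m)) = mtrace (eunit d1 m m)"
      using ch eunit_psd[OF that(1), THEN psd_carrier] unfolding is_channel_def trace_preserving_def
      by blast
    ultimately show ?thesis using psd_diag_le_trace[OF _ that(2)] mtrace_eunit[OF that(1)] by fastforce
  qed
  have "cmod (E (eunit d1 k l) $$ (a,b)) \<le> Re (E (eunit d1 k k) $$ (a,a)) + Re (E (eunit d1 l l) $$ (b,b))"
    using psd_entry_bound[OF cp ib] ent kl ab by simp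
  also have "\<dots> \<le> 2" using diag[OF kl(1) ab(1)] diag[OF kl(2) ab(2)] by linarith
  finally show ?thesis .
qed


lemma real_subseq:
  fixes s :: "nat \<Rightarrow> real"
  assumes "\<And>n. \<bar>s n\<bar> \<le> B"
  shows "\<exists>r l. strict_mono r \<and> (\<lambda>n. s (r n)) \<longlonglongrightarrow> l"
proof -
  obtain r where r: "strict_mono r" and m: "monoseq (\<lambda>n. s (r n))" using seq_monosub by blast
  have "Bseq (\<lambda>n. s (r n))" using assms by (intro BseqI'[of _ B]) auto
  then have "convergent (\<lambda>n. s (r n))" using m Bseq_monoseq_convergent by blast
  then show ?thesis using r convergent_def by blast
qed

lemma complex_subseq:
  fixes s :: "nat \<Rightarrow> complex"
  assumes "\<And>n. cmod (s n) \<le> B"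
  shows "\<exists>r l. strict_mono r \<and> (s \<circ> r) \<longlonglongrightarrow> l"
proof -
  obtain r1 l1 where r1: "strict_mono r1" and l1: "(\<lambda>n. Re (s (r1 n))) \<longlonglongrightarrow> l1"
    using real_subseq[of "\<lambda>n. Re (s n)" B] assms abs_Re_le_cmod order_trans by blast
  obtain r2 l2 where r2: "strict_mono r2" and l2: "(\<lambda>n. Im (s (r1 (r2 n)))) \<longlonglongrightarrow> l2"
    using real_subseq[of "\<lambda>n. Im (s (r1 n))" B] assms abs_Im_le_cmod order_trans by blast
  have "((\<lambda>n. Re (s (r1 n))) \<circ> r2) \<longlonglongrightarrow> l1" using l1 r2 LIMSEQ_subseq_LIMSEQ by blast
  then have "(\<lambda>n. Complex (Re (s (r1 (r2 n)))) (Im (s (r1 (r2 n))))) \<longlonglongrightarrow> Complex l1 l2"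
    using l2 by (intro tendsto_Complex) (auto simp: comp_def)
  then have "(s \<circ> (r1 \<circ> r2)) \<longlonglongrightarrow> Complex l1 l2" by (simp add: comp_def)
  moreover have "strict_mono (r1 \<circ> r2)" using r1 r2 by (rule strict_mono_o)
  ultimately show ?thesis by blast
qed

lemma finite_subseq:
  fixes f :: "nat \<Rightarrow> 'i \<Rightarrow> complex"
  assumes "finite I" "\<And>n i. i \<in> I \<Longrightarrow> cmod (f n i) \<le> B"
  shows "\<exists>r l. strict_mono r \<and> (\<forall>i\<in>I. (\<lambda>n. f (r n) i) \<longlonglongrightarrow> l i)"
  using assms
proof (induction I rule: finite_induct)
  case empty
  show ?case by (rule exI[of _ id]) (auto simp: strict_mono_def)
next
  case (insert j I)
  obtain r l where r: "strict_mono r" and l: "\<forall>i\<in>I. (\<lambda>n. f (r n) i) \<longlonglongrightarrow> l i"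
    using insert by blast
  obtain r2 lj where r2: "strict_mono r2" and lj: "((\<lambda>n. f (r n) j) \<circ> r2) \<longlonglongrightarrow> lj"
    using complex_subseq[of "\<lambda>n. f (r n) j" B] insert.prems by blast
  have "strict_mono (r \<circ> r2)" using r r2 by (rule strict_mono_o)
  moreover have "\<forall>i\<in>insert j I. (\<lambda>n. f ((r \<circ> r2) n) i) \<longlonglongrightarrow> (l(j := lj)) i"
  proof
    fix i assume i: "i \<in> insert j I"
    show "(\<lambda>n. f ((r \<circ> r2) n) i) \<longlonglongrightarrow> (l(j := lj)) i"
    proof (cases "i = j")
      case True then show ?thesis using lj by (simp add: comp_def)
    next
      case False
      then have "i \<in> I" using i by auto
      then have "((\<lambda>n. f (r n) i) \<circ> r2) \<longlonglongrightarrow> l i" using l r2 LIMSEQ_subseq_LIMSEQ by blast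
      then show ?thesis using False by (simp add: comp_def)
    qed
  qed
  ultimately show ?case by blast
qed


lemma mtrace_comb:
  assumes "A \<in> carrier_mat n n" "B \<in> carrier_mat n n"
  shows "mtrace (a \<cdot>\<^sub>m A + b \<cdot>\<^sub>m B) = a * mtrace A + b * mtrace B"
  using assms unfolding mtrace_def by (simp add: sum.distrib sum_distrib_left)

lemma mult_entry:
  assumes "A \<in> carrier_mat n m" "B \<in> carrier_mat m p" "i < n" "j < p"
  shows "(A * B) $$ (i,j) = (\<Sum>c<m. A $$ (i,c) * B $$ (c,j))"
  using assms by (simp add: scalar_prod_def atLeast0LessThan)

lemma adj_carrier: "U \<in> carrier_mat n n \<Longrightarrow> adj U \<in> carrier_mat n n"
  unfolding adj_def by auto

lemma comb_chan:
  fixes t :: real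
  assumes ch1: "is_channel d1 d2 E1" and ch2: "is_channel d1 d2 E2"
    and t: "0 \<le> t" "t \<le> 1"
  shows "is_channel d1 d2 (\<lambda>X. complex_of_real t \<cdot>\<^sub>m E1 X + complex_of_real (1-t) \<cdot>\<^sub>m E2 X)"
proof -
  let ?a = "complex_of_real t" and ?b = "complex_of_real (1-t)"
  let ?E = "\<lambda>X. ?a \<cdot>\<^sub>m E1 X + ?b \<cdot>\<^sub>m E2 X"
  have l1: "linear_map_mat d1 d2 E1" and l2: "linear_map_mat d1 d2 E2"
    using ch1 ch2 unfolding is_channel_def by auto
  have c1: "\<And>X. X \<in> carrier_mat d1 d1 \<Longrightarrow> E1 X \<in> carrier_mat d2 d2"
    and c2: "\<And>X. X \<in> carrier_mat d1 d1 \<Longrightarrow> E2 X \<in> carrier_mat d2 d2"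
    using l1 l2 unfolding linear_map_mat_def by auto
  have lin: "linear_map_mat d1 d2 ?E"
    unfolding linear_map_mat_def
  proof (intro conjI ballI allI)
    fix X :: "complex mat" assume X: "X \<in> carrier_mat d1 d1"
    show "?E X \<in> carrier_mat d2 d2" using c1[OF X] c2[OF X] by auto
    fix Y :: "complex mat" assume Y: "Y \<in> carrier_mat d1 d1"
    have "E1 (X + Y) = E1 X + E1 Y" "E2 (X + Y) = E2 X + E2 Y"
      using l1 l2 X Y unfolding linear_map_mat_def by auto
    then show "?E (X + Y) = ?E X + ?E Y"
      using c1[OF X] c2[OF X] c1[OF Y] c2[OF Y]
      by (intro eq_matI) (auto simp: algebra_simps)
  next
    fix c :: complex and X :: "complex mat" assume X: "X \<in> carrier_mat d1 d1"
    have "E1 (c \<cdot>\<^sub>m X) = c \<cdot>\<^sub>m E1 X" "E2 (c \<cdot>\<^sub>m X) = c \<cdot>\<^sub>m E2 X"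
      using l1 l2 X unfolding linear_map_mat_def by auto
    then show "?E (c \<cdot>\<^sub>m X) = c \<cdot>\<^sub>m ?E X"
      using c1[OF X] c2[OF X]
      by (intro eq_matI) (auto simp: algebra_simps)
  qed
  have cp: "completely_positive d1 d2 ?E"
    unfolding completely_positive_def
  proof (intro allI impI)
    fix n and X :: "complex mat" assume X: "psd (n * d1) X"
    have p1: "psd (n*d2) (ampliation n d1 d2 E1 X)" and p2: "psd (n*d2) (ampliation n d1 d2 E2 X)"
      using ch1 ch2 X unfolding is_channel_def completely_positive_def by auto
    have bc: "\<And>k l. block_of d1 X k l \<in> carrier_mat d1 d1" unfolding block_of_def by auto
    have "ampliation n d1 d2 ?E X = ?a \<cdot>\<^sub>m ampliation n d1 d2 E1 X + ?b \<cdot>\<^sub>m ampliation n d1 d2 E2 X"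
    proof (rule eq_matI)
      fix i j assume "i < dim_row (?a \<cdot>\<^sub>m ampliation n d1 d2 E1 X + ?b \<cdot>\<^sub>m ampliation n d1 d2 E2 X)"
        "j < dim_col (?a \<cdot>\<^sub>m ampliation n d1 d2 E1 X + ?b \<cdot>\<^sub>m ampliation n d1 d2 E2 X)"
      then have ij: "i < n*d2" "j < n*d2" unfolding ampliation_def by auto
      then have d2: "d2 > 0" by (cases "d2 = 0") auto
      then have m: "i mod d2 < d2" "j mod d2 < d2" by auto
      have B1: "E1 (block_of d1 X (i div d2) (j div d2)) \<in> carrier_mat d2 d2" using c1[OF bc] .
      have B2: "E2 (block_of d1 X (i div d2) (j div d2)) \<in> carrier_mat d2 d2" using c2[OF bc] .
      show "ampliation n d1 d2 ?E X $$ (i,j) = (?a \<cdot>\<^sub>m ampliation n d1 d2 E1 X + ?b \<cdot>\<^sub>m ampliation n d1 d2 E2 X) $$ (i,j)"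
        using ij m B1 B2 unfolding ampliation_def by simp
    qed (auto simp: ampliation_def)
    then show "psd (n * d2) (ampliation n d1 d2 ?E X)"
      using psd_comb[OF p1 p2 t(1), of "1-t"] t by simp
  qed
  have tp: "trace_preserving d1 ?E"
    unfolding trace_preserving_def
  proof
    fix X :: "complex mat" assume X: "X \<in> carrier_mat d1 d1"
    have "mtrace (E1 X) = mtrace X" "mtrace (E2 X) = mtrace X"
      using ch1 ch2 X unfolding is_channel_def trace_preserving_def by auto
    then show "mtrace (?E X) = mtrace X"
      using mtrace_comb[OF c1[OF X] c2[OF X]] by (simp add: algebra_simps)
  qed
  show ?thesis using lin cp tp unfolding is_channel_def by blast
qed

lemma comb_cov:
  assumes ch1: "is_channel dA dB E1" and ch2: "is_channel dA dB E2"
    and cv1: "covariant G dA UA UB E1" and cv2: "covariant G dA UA UB E2"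
    and UB: "\<And>g. g \<in> carrier G \<Longrightarrow> UB g \<in> carrier_mat dB dB"
  shows "covariant G dA UA UB (\<lambda>X. a \<cdot>\<^sub>m E1 X + b \<cdot>\<^sub>m E2 X)"
  unfolding covariant_def
proof (intro ballI)
  fix g and X :: "complex mat" assume g: "g \<in> carrier G" and X: "X \<in> carrier_mat dA dA"
  have c1: "E1 X \<in> carrier_mat dB dB" and c2: "E2 X \<in> carrier_mat dB dB"
    using ch1 ch2 X unfolding is_channel_def linear_map_mat_def by auto
  have U: "UB g \<in> carrier_mat dB dB" and U': "adj (UB g) \<in> carrier_mat dB dB"
    using UB[OF g] adj_carrier by auto
  have "UB g * (a \<cdot>\<^sub>m E1 X + b \<cdot>\<^sub>m E2 X) * adj (UB g)
      = (a \<cdot>\<^sub>m (UB g * E1 X) + b \<cdot>\<^sub>m (UB g * E2 X)) * adj (UB g)"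
  proof -
    have "UB g * (a \<cdot>\<^sub>m E1 X + b \<cdot>\<^sub>m E2 X) = UB g * (a \<cdot>\<^sub>m E1 X) + UB g * (b \<cdot>\<^sub>m E2 X)"
      using U c1 c2 by (intro mult_add_distrib_mat[of _ dB dB]) auto
    also have "\<dots> = a \<cdot>\<^sub>m (UB g * E1 X) + b \<cdot>\<^sub>m (UB g * E2 X)"
      using mult_smult_distrib[OF U c1] mult_smult_distrib[OF U c2] by simp
    finally show ?thesis by simp
  qed
  also have "\<dots> = a \<cdot>\<^sub>m (UB g * E1 X) * adj (UB g) + b \<cdot>\<^sub>m (UB g * E2 X) * adj (UB g)"
    using U U' c1 c2 by (intro add_mult_distrib_mat[of _ dB dB]) auto
  also have "\<dots> = a \<cdot>\<^sub>m (UB g * E1 X * adj (UB g)) + b \<cdot>\<^sub>m (UB g * E2 X * adj (UB g))"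
    using U U' c1 c2 by (simp add: mult_smult_assoc_mat[of _ dB dB])
  finally show "a \<cdot>\<^sub>m E1 (UA g * X * adj (UA g)) + b \<cdot>\<^sub>m E2 (UA g * X * adj (UA g))
     = UB g * (a \<cdot>\<^sub>m E1 X + b \<cdot>\<^sub>m E2 X) * adj (UB g)"
    using cv1 cv2 g X unfolding covariant_def by simp
qed


lemma prod_lim:
  fixes U V M' :: "complex mat"
  assumes M: "\<And>k. M k \<in> carrier_mat d d" and M': "M' \<in> carrier_mat d d"
    and U: "U \<in> carrier_mat d d" and V: "V \<in> carrier_mat d d"
    and lim: "\<And>a b. a < d \<Longrightarrow> b < d \<Longrightarrow> (\<lambda>k. M k $$ (a,b)) \<longlonglongrightarrow> M' $$ (a,b)"
    and ab: "a < d" "b < d"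
  shows "(\<lambda>k. (U * M k * V) $$ (a,b)) \<longlonglongrightarrow> (U * M' * V) $$ (a,b)"
proof -
  have e: "(U * N * V) $$ (a,b) = (\<Sum>c<d. (\<Sum>e<d. U $$ (a,e) * N $$ (e,c)) * V $$ (c,b))"
    if N: "N \<in> carrier_mat d d" for N
  proof -
    have "(U * N * V) $$ (a,b) = (\<Sum>c<d. (U * N) $$ (a,c) * V $$ (c,b))"
      using U N V ab by (intro mult_entry[of _ d d]) auto
    also have "\<dots> = (\<Sum>c<d. (\<Sum>e<d. U $$ (a,e) * N $$ (e,c)) * V $$ (c,b))"
      using U N ab by (intro sum.cong refl arg_cong[where f="\<lambda>z. z * _"]) (rule mult_entry[OF U N ab(1)]; simp)
    finally show ?thesis .
  qed
  have inner: "(\<lambda>k. \<Sum>e<d. U $$ (a,e) * M k $$ (e,c)) \<longlonglongrightarrow> (\<Sum>e<d. U $$ (a,e) * M' $$ (e,c))"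
    if c: "c < d" for c
  proof (rule tendsto_sum)
    fix e assume "e \<in> {..<d}"
    then show "(\<lambda>k. U $$ (a,e) * M k $$ (e,c)) \<longlonglongrightarrow> U $$ (a,e) * M' $$ (e,c)"
      using c by (intro tendsto_mult_left lim) auto
  qed
  have "(\<lambda>k. \<Sum>c<d. (\<Sum>e<d. U $$ (a,e) * M k $$ (e,c)) * V $$ (c,b)) \<longlonglongrightarrow> (\<Sum>c<d. (\<Sum>e<d. U $$ (a,e) * M' $$ (e,c)) * V $$ (c,b))"
  proof (rule tendsto_sum)
    fix c assume "c \<in> {..<d}"
    then show "(\<lambda>k. (\<Sum>e<d. U $$ (a,e) * M k $$ (e,c)) * V $$ (c,b)) \<longlonglongrightarrow> (\<Sum>e<d. U $$ (a,e) * M' $$ (e,c)) * V $$ (c,b)"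
      by (intro tendsto_mult_right inner) auto
  qed
  then show ?thesis unfolding e[OF M] e[OF M'] .
qed

lemma lim_mat_eq:
  fixes M N :: "complex mat"
  assumes "M \<in> carrier_mat d d" "N \<in> carrier_mat d d"
    and "\<And>a b. a < d \<Longrightarrow> b < d \<Longrightarrow> \<exists>s. s \<longlonglongrightarrow> M $$ (a,b) \<and> s \<longlonglongrightarrow> N $$ (a,b)"
  shows "M = N"
proof (rule eq_matI)
  fix a b assume "a < dim_row N" "b < dim_col N"
  then have "a < d" "b < d" using assms by auto
  then obtain s where "s \<longlonglongrightarrow> M $$ (a,b)" "s \<longlonglongrightarrow> N $$ (a,b)" using assms(3) by blast
  then show "M $$ (a,b) = N $$ (a,b)" by (rule LIMSEQ_unique)
next
  show "dim_row M = dim_row N" using assms(1,2) by simp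
next
  show "dim_col M = dim_col N" using assms(1,2) by simp
qed

lemma limit_channel:
  fixes Es :: "nat \<Rightarrow> complex mat \<Rightarrow> complex mat"
  assumes chs: "\<And>n. is_channel d1 d2 (Es n) \<and> covariant G d1 U1 U2 (Es n)"
    and U1: "\<And>g. g \<in> carrier G \<Longrightarrow> U1 g \<in> carrier_mat d1 d1"
    and U2: "\<And>g. g \<in> carrier G \<Longrightarrow> U2 g \<in> carrier_mat d2 d2"
  shows "\<exists>r E. strict_mono r \<and> is_channel d1 d2 E \<and> covariant G d1 U1 U2 E \<and>
    (\<forall>X\<in>carrier_mat d1 d1. \<forall>a<d2. \<forall>b<d2. (\<lambda>n. Es (r n) X $$ (a,b)) \<longlonglongrightarrow> E X $$ (a,b))"
proof -
  define I where "I = {0..<d1}\<times>{0..<d1}\<times>{0..<d2}\<times>{0..<d2}"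
  define f where "f = (\<lambda>n (k,l,a,b). Es n (eunit d1 k l) $$ (a,b))"
  have "\<exists>r l. strict_mono r \<and> (\<forall>i\<in>I. (\<lambda>n. f (r n) i) \<longlonglongrightarrow> l i)"
  proof (rule finite_subseq[of I f 2])
    show "finite I" unfolding I_def by auto
    fix n i assume "i \<in> I"
    then show "cmod (f n i) \<le> 2" unfolding I_def f_def
      using chan_coeff_bound[of d1 d2 "Es n"] chs[of n] by auto
  qed
  then obtain r C where r: "strict_mono r" and C: "\<forall>i\<in>I. (\<lambda>n. f (r n) i) \<longlonglongrightarrow> C i" by blast
  define E where "E = (\<lambda>X. mat d2 d2 (\<lambda>(a,b). \<Sum>(k,l)\<in>{0..<d1}\<times>{0..<d1}. X $$ (k,l) * C (k,l,a,b)))"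
  have lin: "\<And>n. linear_map_mat d1 d2 (Es n)" using chs unfolding is_channel_def by auto
  have Ec: "\<And>X. E X \<in> carrier_mat d2 d2" unfolding E_def by auto
  have Esc: "\<And>n X. X \<in> carrier_mat d1 d1 \<Longrightarrow> Es n X \<in> carrier_mat d2 d2"
    using lin unfolding linear_map_mat_def by blast
  have conv: "(\<lambda>n. Es (r n) X $$ (a,b)) \<longlonglongrightarrow> E X $$ (a,b)"
    if X: "X \<in> carrier_mat d1 d1" and ab: "a < d2" "b < d2" for X a b
  proof -
    have "(\<lambda>n. Es (r n) X $$ (a,b)) = (\<lambda>n. \<Sum>(k,l)\<in>{0..<d1}\<times>{0..<d1}. X $$ (k,l) * f (r n) (k,l,a,b))"
      using lin_repr[OF lin X ab] unfolding f_def by simp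
    moreover have "(\<lambda>n. \<Sum>(k,l)\<in>{0..<d1}\<times>{0..<d1}. X $$ (k,l) * f (r n) (k,l,a,b))
        \<longlonglongrightarrow> (\<Sum>(k,l)\<in>{0..<d1}\<times>{0..<d1}. X $$ (k,l) * C (k,l,a,b))"
    proof (intro tendsto_sum, clarify)
      fix k l assume "k \<in> {0..<d1}" "l \<in> {0..<d1}"
      then have "(k,l,a,b) \<in> I" using ab unfolding I_def by auto
      then show "(\<lambda>n. X $$ (k,l) * f (r n) (k,l,a,b)) \<longlonglongrightarrow> X $$ (k,l) * C (k,l,a,b)"
        using C by (intro tendsto_mult tendsto_const) auto
    qed
    ultimately show ?thesis using ab unfolding E_def by simp
  qed
  have linE: "linear_map_mat d1 d2 E"
    unfolding linear_map_mat_def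
  proof (intro conjI ballI allI Ec)
    fix X Y :: "complex mat" assume X: "X \<in> carrier_mat d1 d1" and Y: "Y \<in> carrier_mat d1 d1"
    show "E (X + Y) = E X + E Y"
    proof (rule lim_mat_eq[OF Ec])
      show "E X + E Y \<in> carrier_mat d2 d2" using Ec by auto
      fix a b assume ab: "a < d2" "b < d2"
      have "Es (r n) (X + Y) = Es (r n) X + Es (r n) Y" for n
        using lin X Y unfolding linear_map_mat_def by blast
      then have "(\<lambda>n. Es (r n) (X + Y) $$ (a,b)) = (\<lambda>n. Es (r n) X $$ (a,b) + Es (r n) Y $$ (a,b))"
        using carrier_matD[OF Esc[OF Y]] ab by auto
      moreover have "(\<lambda>n. Es (r n) X $$ (a,b) + Es (r n) Y $$ (a,b)) \<longlonglongrightarrow> (E X + E Y) $$ (a,b)"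
        using conv[OF X ab] conv[OF Y ab] Ec[of Y] ab by (auto intro: tendsto_add)
      ultimately show "\<exists>s. s \<longlonglongrightarrow> E (X + Y) $$ (a,b) \<and> s \<longlonglongrightarrow> (E X + E Y) $$ (a,b)"
        using conv[of "X+Y", OF _ ab] X Y by auto
    qed
  next
    fix c :: complex and X :: "complex mat" assume X: "X \<in> carrier_mat d1 d1"
    show "E (c \<cdot>\<^sub>m X) = c \<cdot>\<^sub>m E X"
    proof (rule lim_mat_eq[OF Ec])
      show "c \<cdot>\<^sub>m E X \<in> carrier_mat d2 d2" using Ec by auto
      fix a b assume ab: "a < d2" "b < d2"
      have "Es (r n) (c \<cdot>\<^sub>m X) = c \<cdot>\<^sub>m Es (r n) X" for n
        using lin X unfolding linear_map_mat_def by blast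
      then have "(\<lambda>n. Es (r n) (c \<cdot>\<^sub>m X) $$ (a,b)) = (\<lambda>n. c * Es (r n) X $$ (a,b))"
        using carrier_matD[OF Esc[OF X]] ab by auto
      moreover have "(\<lambda>n. c * Es (r n) X $$ (a,b)) \<longlonglongrightarrow> (c \<cdot>\<^sub>m E X) $$ (a,b)"
        using conv[OF X ab] Ec[of X] ab by (auto intro: tendsto_mult)
      ultimately show "\<exists>s. s \<longlonglongrightarrow> E (c \<cdot>\<^sub>m X) $$ (a,b) \<and> s \<longlonglongrightarrow> (c \<cdot>\<^sub>m E X) $$ (a,b)"
        using conv[of "c \<cdot>\<^sub>m X", OF _ ab] X by auto
    qed
  qed
  have tpE: "trace_preserving d1 E"
    unfolding trace_preserving_def
  proof
    fix X :: "complex mat" assume X: "X \<in> carrier_mat d1 d1"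
    have "(\<lambda>n. mtrace (Es (r n) X)) \<longlonglongrightarrow> mtrace (E X)"
    proof -
      have "(\<lambda>n. \<Sum>i<d2. Es (r n) X $$ (i, i)) \<longlonglongrightarrow> (\<Sum>i<d2. E X $$ (i, i))"
        by (rule tendsto_sum) (rule conv[OF X]; simp)
      then show ?thesis unfolding mtrace_def using carrier_matD[OF Esc[OF X]] carrier_matD[OF Ec[of X]] by simp
    qed
    moreover have "(\<lambda>n. mtrace (Es (r n) X)) = (\<lambda>n. mtrace X)"
      using chs X unfolding is_channel_def trace_preserving_def by auto
    ultimately show "mtrace (E X) = mtrace X" using LIMSEQ_unique tendsto_const by metis
  qed
  have cpE: "completely_positive d1 d2 E"
    unfolding completely_positive_def
  proof (intro allI impI)
    fix n and X :: "complex mat" assume X: "psd (n * d1) X"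
    have bc: "\<And>k l. block_of d1 X k l \<in> carrier_mat d1 d1" unfolding block_of_def by auto
    show "psd (n * d2) (ampliation n d1 d2 E X)"
    proof (rule psd_limit[where A="\<lambda>k. ampliation n d1 d2 (Es (r k)) X" and n="n*d2"])
      show "\<And>k. psd (n * d2) (ampliation n d1 d2 (Es (r k)) X)"
        using chs X unfolding is_channel_def completely_positive_def by blast
      show "ampliation n d1 d2 E X \<in> carrier_mat (n * d2) (n * d2)" unfolding ampliation_def by auto
      fix i j assume ij: "i < n * d2" "j < n * d2"
      then have d2: "d2 > 0" by (cases "d2 = 0") auto
      then have m: "i mod d2 < d2" "j mod d2 < d2" by auto
      show "(\<lambda>k. ampliation n d1 d2 (Es (r k)) X $$ (i,j)) \<longlonglongrightarrow> ampliation n d1 d2 E X $$ (i,j)"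
        unfolding ampliation_def using ij conv[OF bc m] by simp
    qed
  qed
  have covE: "covariant G d1 U1 U2 E"
    unfolding covariant_def
  proof (intro ballI)
    fix g and X :: "complex mat" assume g: "g \<in> carrier G" and X: "X \<in> carrier_mat d1 d1"
    have Y: "U1 g * X * adj (U1 g) \<in> carrier_mat d1 d1" using U1[OF g] X adj_carrier[OF U1[OF g]] by auto
    show "E (U1 g * X * adj (U1 g)) = U2 g * E X * adj (U2 g)"
    proof (rule lim_mat_eq[OF Ec])
      show "U2 g * E X * adj (U2 g) \<in> carrier_mat d2 d2" using U2[OF g] Ec adj_carrier[OF U2[OF g]] by auto
      fix a b assume ab: "a < d2" "b < d2"
      have "(\<lambda>n. Es (r n) (U1 g * X * adj (U1 g)) $$ (a,b)) = (\<lambda>n. (U2 g * Es (r n) X * adj (U2 g)) $$ (a,b))"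
        using chs g X unfolding covariant_def by auto
      moreover have "(\<lambda>n. (U2 g * Es (r n) X * adj (U2 g)) $$ (a,b)) \<longlonglongrightarrow> (U2 g * E X * adj (U2 g)) $$ (a,b)"
        by (rule prod_lim[OF Esc[OF X] Ec U2[OF g] adj_carrier[OF U2[OF g]] conv[OF X] ab])
      ultimately show "\<exists>s. s \<longlonglongrightarrow> E (U1 g * X * adj (U1 g)) $$ (a,b) \<and> s \<longlonglongrightarrow> (U2 g * E X * adj (U2 g)) $$ (a,b)"
        using conv[OF Y ab] by auto
    qed
  qed
  show ?thesis
    using r linE cpE tpE covE conv unfolding is_channel_def by blast
qed


lemma cmod_expand:
  fixes h w :: complex and t :: real
  shows "(cmod (h + complex_of_real t * w))\<^sup>2 = (cmod h)\<^sup>2 + 2 * t * Re (cnj h * w) + t\<^sup>2 * (cmod w)\<^sup>2"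
  unfolding cmod_power2 by (simp add: power2_eq_square algebra_simps)

lemma var_real:
  fixes S W :: real
  assumes "\<And>t. 0 < t \<Longrightarrow> t \<le> 1 \<Longrightarrow> 0 \<le> 2 * t * S + t\<^sup>2 * W"
  shows "S \<ge> 0"
proof (rule ccontr)
  assume S: "\<not> S \<ge> 0"
  have W: "W \<ge> 0"
  proof (rule ccontr)
    assume "\<not> W \<ge> 0"
    then have "2 * 1 * S + 1\<^sup>2 * W < 0" using S by simp
    then show False using assms[of 1] by simp
  qed
  define t where "t = min 1 (- S / (W + 1))"
  have t0: "0 < t" unfolding t_def using S W by (simp add: field_simps)
  have t1: "t \<le> 1" unfolding t_def by simp
  have "t * W \<le> (- S / (W + 1)) * W" unfolding t_def using W by (intro mult_right_mono) auto
  also have "\<dots> < - S" using S W by (simp add: field_simps)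
  finally have tW: "t * W < - S" .
  have "2 * t * S + t\<^sup>2 * W = t * (2 * S + t * W)" by (simp add: power2_eq_square algebra_simps)
  moreover have "2 * S + t * W < 0" using tW S by linarith
  ultimately have "2 * t * S + t\<^sup>2 * W < 0" using t0 by (simp add: mult_pos_neg)
  then show False using assms[OF t0 t1] by simp
qed

lemma qbound:
  fixes h :: "nat \<Rightarrow> nat \<Rightarrow> complex" and x :: "nat \<Rightarrow> complex"
  shows "cmod (\<Sum>i<n. \<Sum>j<n. h i j * x j * cnj (x i)) \<le> (\<Sum>i<n. \<Sum>j<n. cmod (h i j)) * (\<Sum>i<n. (cmod (x i))\<^sup>2)"
proof -
  define N where "N = (\<Sum>i<n. (cmod (x i))\<^sup>2)"
  have xi: "(cmod (x i))\<^sup>2 \<le> N" if "i < n" for i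
    unfolding N_def by (rule member_le_sum[of i "{..<n}" "\<lambda>i. (cmod (x i))\<^sup>2"]) (use that in auto)
  have xx: "cmod (x j) * cmod (x i) \<le> N" if "i < n" "j < n" for i j
  proof -
    have "cmod (x j) * cmod (x i) \<le> ((cmod (x j))\<^sup>2 + (cmod (x i))\<^sup>2) / 2"
      using sum_squares_bound[of "cmod (x j)" "cmod (x i)"] by (simp add: power2_eq_square field_simps)
    also have "\<dots> \<le> N" using xi[OF that(1)] xi[OF that(2)] by simp
    finally show ?thesis .
  qed
  have "cmod (\<Sum>i<n. \<Sum>j<n. h i j * x j * cnj (x i)) \<le> (\<Sum>i<n. cmod (\<Sum>j<n. h i j * x j * cnj (x i)))"
    by (rule norm_sum)
  also have "\<dots> \<le> (\<Sum>i<n. \<Sum>j<n. cmod (h i j * x j * cnj (x i)))"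
    by (intro sum_mono norm_sum)
  also have "\<dots> = (\<Sum>i<n. \<Sum>j<n. cmod (h i j) * (cmod (x j) * cmod (x i)))"
    by (simp add: norm_mult mult.assoc)
  also have "\<dots> \<le> (\<Sum>i<n. \<Sum>j<n. cmod (h i j) * N)"
    by (intro sum_mono mult_left_mono xx) auto
  also have "\<dots> = (\<Sum>i<n. \<Sum>j<n. cmod (h i j)) * N"
    by (simp add: sum_distrib_right)
  finally show ?thesis unfolding N_def .
qed

lemma hs_inner_formula:
  assumes "A \<in> carrier_mat n n" "X \<in> carrier_mat n n"
  shows "hs_inner A X = (\<Sum>a<n. \<Sum>b<n. cnj (A $$ (a,b)) * X $$ (a,b))"
proof -
  have adjA: "adj A \<in> carrier_mat n n" using adj_carrier assms(1) .
  have "hs_inner A X = (\<Sum>i<n. (adj A * X) $$ (i,i))"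
    unfolding hs_inner_def mtrace_def using adjA assms by simp
  also have "\<dots> = (\<Sum>i<n. \<Sum>c<n. cnj (A $$ (c,i)) * X $$ (c,i))"
  proof (intro sum.cong refl)
    fix i assume i: "i \<in> {..<n}"
    have "(adj A * X) $$ (i,i) = (\<Sum>c<n. adj A $$ (i,c) * X $$ (c,i))"
      using i by (intro mult_entry[OF adjA assms(2)]) auto
    also have "\<dots> = (\<Sum>c<n. cnj (A $$ (c,i)) * X $$ (c,i))"
      using i assms(1) by (intro sum.cong refl) (auto simp: adj_def)
    finally show "(adj A * X) $$ (i,i) = (\<Sum>c<n. cnj (A $$ (c,i)) * X $$ (c,i))" .
  qed
  also have "\<dots> = (\<Sum>a<n. \<Sum>b<n. cnj (A $$ (a,b)) * X $$ (a,b))"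
    by (rule sum.swap)
  finally show ?thesis .
qed


lemma var_step:
  fixes h w :: "nat \<Rightarrow> nat \<Rightarrow> complex"
  assumes "\<And>t. 0 < t \<Longrightarrow> t \<le> 1 \<Longrightarrow>
    (\<Sum>a<n. \<Sum>b<n. (cmod (h a b))\<^sup>2) \<le> (\<Sum>a<n. \<Sum>b<n. (cmod (h a b + complex_of_real t * w a b))\<^sup>2)"
  shows "0 \<le> Re (\<Sum>a<n. \<Sum>b<n. cnj (h a b) * w a b)"
proof -
  define sf where "sf = (\<lambda>a b. Re (cnj (h a b) * w a b))"
  define S where "S = (\<Sum>a<n. \<Sum>b<n. sf a b)"
  have ex: "\<And>a b t. (cmod (h a b + complex_of_real t * w a b))\<^sup>2 = (cmod (h a b))\<^sup>2 + 2 * t * sf a b + t\<^sup>2 * (cmod (w a b))\<^sup>2"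
    unfolding sf_def by (rule cmod_expand)
  define W where "W = (\<Sum>a<n. \<Sum>b<n. (cmod (w a b))\<^sup>2)"
  have "S \<ge> 0"
  proof (rule var_real[of S W])
    fix t :: real assume t: "0 < t" "t \<le> 1"
    have "(\<Sum>a<n. \<Sum>b<n. (cmod (h a b + complex_of_real t * w a b))\<^sup>2)
      = (\<Sum>a<n. \<Sum>b<n. (cmod (h a b))\<^sup>2 + 2 * t * sf a b + t\<^sup>2 * (cmod (w a b))\<^sup>2)"
      by (simp only: ex)
    also have "\<dots> = (\<Sum>a<n. \<Sum>b<n. (cmod (h a b))\<^sup>2) + 2 * t * S + t\<^sup>2 * W"
      unfolding S_def W_def by (simp add: sum.distrib sum_distrib_left)
    finally show "0 \<le> 2 * t * S + t\<^sup>2 * W" using assms[OF t] by simp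
  qed
  then show ?thesis unfolding S_def sf_def by (simp add: Re_sum)
qed

theorem lemma17:
  fixes G :: "('g, 'b) monoid_scheme" and T :: "'g topology"
    and dA dB :: nat and UA UB :: "'g \<Rightarrow> complex mat"
    and \<rho> \<sigma> :: "complex mat"
    and Efam :: "complex mat \<Rightarrow> complex mat \<Rightarrow> complex mat"
  assumes "compact_group G T"
    and "cont_unitary_rep G T dA UA"
    and "cont_unitary_rep G T dB UB"
    and "is_state dA \<rho>"
    and "is_state dB \<sigma>"
    and "\<And>\<eta>. is_state dB \<eta> \<Longrightarrow> is_channel dA dB (Efam \<eta>) \<and> covariant G dA UA UB (Efam \<eta>)"
    and "\<And>\<eta>. is_state dB \<eta> \<Longrightarrow> Re (hs_inner \<eta> (Efam \<eta> \<rho>)) \<ge> Re (hs_inner \<eta> \<sigma>)"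
  shows "\<exists>E. is_channel dA dB E \<and> covariant G dA UA UB E \<and> E \<rho> = \<sigma>"
proof -
  define COV where "COV = (\<lambda>E. is_channel dA dB E \<and> covariant G dA UA UB E)"
  have UA: "\<And>g. g \<in> carrier G \<Longrightarrow> UA g \<in> carrier_mat dA dA"
    using assms(2) unfolding cont_unitary_rep_def unitary_mat_def by blast
  have UB: "\<And>g. g \<in> carrier G \<Longrightarrow> UB g \<in> carrier_mat dB dB"
    using assms(3) unfolding cont_unitary_rep_def unitary_mat_def by blast
  have rho: "psd dA \<rho>" "mtrace \<rho> = 1" using assms(4) unfolding is_state_def by auto
  have sig: "psd dB \<sigma>" "mtrace \<sigma> = 1" using assms(5) unfolding is_state_def by auto
  have rhoc: "\<rho> \<in> carrier_mat dA dA" using psd_carrier[OF rho(1)] .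
  have sigc: "\<sigma> \<in> carrier_mat dB dB" using psd_carrier[OF sig(1)] .
  have COVc: "E X \<in> carrier_mat dB dB" if "COV E" "X \<in> carrier_mat dA dA" for E X
    using that unfolding COV_def is_channel_def linear_map_mat_def by blast
  have COVtr: "mtrace (E \<rho>) = 1" if "COV E" for E
    using that rhoc rho(2) unfolding COV_def is_channel_def trace_preserving_def by auto
  have COVpsd: "psd dB (E \<rho>)" if "COV E" for E
    using that chan_pos rho(1) unfolding COV_def by blast
  define val where "val = (\<lambda>E::complex mat \<Rightarrow> complex mat. \<Sum>a<dB. \<Sum>b<dB. (cmod (E \<rho> $$ (a,b) - \<sigma> $$ (a,b)))\<^sup>2)"
  define V where "V = val ` {E. COV E}"
  have V0: "V \<noteq> {}" unfolding V_def COV_def using assms(6)[OF assms(5)] by blast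
  have Vb: "bdd_below V" unfolding V_def val_def
    by (rule bdd_belowI[of _ 0]) (auto intro!: sum_nonneg)
  define \<delta> where "\<delta> = Inf V"
  have lowb: "\<delta> \<le> val E" if "COV E" for E
    unfolding \<delta>_def using that Vb by (intro cInf_lower) (auto simp: V_def)
  have "\<forall>n. \<exists>E. COV E \<and> val E < \<delta> + inverse (real (Suc n))"
  proof
    fix n
    have "Inf V < \<delta> + inverse (real (Suc n))" unfolding \<delta>_def by simp
    then obtain v where "v \<in> V" "v < \<delta> + inverse (real (Suc n))" using cInf_lessD[OF V0] by blast
    then show "\<exists>E. COV E \<and> val E < \<delta> + inverse (real (Suc n))" unfolding V_def by blast
  qed
  then obtain Es where Es: "\<And>n. COV (Es n)" "\<And>n. val (Es n) < \<delta> + inverse (real (Suc n))" by metis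
  have valEs: "(\<lambda>n. val (Es n)) \<longlonglongrightarrow> \<delta>"
  proof (rule tendsto_sandwich[of "\<lambda>n. \<delta>" _ _ "\<lambda>n. \<delta> + inverse (real (Suc n))"])
    show "\<forall>\<^sub>F n in sequentially. \<delta> \<le> val (Es n)" using lowb Es(1) by simp
    show "\<forall>\<^sub>F n in sequentially. val (Es n) \<le> \<delta> + inverse (real (Suc n))"
      by (intro always_eventually allI less_imp_le Es(2))
    show "(\<lambda>n. \<delta>) \<longlonglongrightarrow> \<delta>" by simp
    show "(\<lambda>n. \<delta> + inverse (real (Suc n))) \<longlonglongrightarrow> \<delta>"
      using tendsto_add[OF tendsto_const[of \<delta>] LIMSEQ_inverse_real_of_nat] by simp
  qed
  obtain r E0 where r: "strict_mono r" and E0ch: "is_channel dA dB E0" and E0cov: "covariant G dA UA UB E0"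
    and conv: "\<forall>X\<in>carrier_mat dA dA. \<forall>a<dB. \<forall>b<dB. (\<lambda>n. Es (r n) X $$ (a,b)) \<longlonglongrightarrow> E0 X $$ (a,b)"
    using limit_channel[of dA dB Es G UA UB] Es(1) UA UB unfolding COV_def by metis
  have COV0: "COV E0" unfolding COV_def using E0ch E0cov by blast
  have "(\<lambda>n. val (Es (r n))) \<longlonglongrightarrow> val E0"
    unfolding val_def
  proof (intro tendsto_sum)
    fix a b assume ab: "a \<in> {..<dB}" "b \<in> {..<dB}"
    have "(\<lambda>n. Es (r n) \<rho> $$ (a,b)) \<longlonglongrightarrow> E0 \<rho> $$ (a,b)" using conv rhoc ab by auto
    then show "(\<lambda>n. (cmod (Es (r n) \<rho> $$ (a,b) - \<sigma> $$ (a,b)))\<^sup>2) \<longlonglongrightarrow> (cmod (E0 \<rho> $$ (a,b) - \<sigma> $$ (a,b)))\<^sup>2"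
      by (intro tendsto_power tendsto_norm tendsto_diff tendsto_const)
  qed
  moreover have "(\<lambda>n. val (Es (r n))) \<longlonglongrightarrow> \<delta>"
    using LIMSEQ_subseq_LIMSEQ[OF valEs r] by (simp add: comp_def)
  ultimately have "val E0 = \<delta>" using LIMSEQ_unique by blast
  then have minE0: "val E0 \<le> val E" if "COV E" for E using lowb[OF that] by simp
  define \<tau>0 where "\<tau>0 = E0 \<rho>"
  have t0c: "\<tau>0 \<in> carrier_mat dB dB" unfolding \<tau>0_def using COVc[OF COV0 rhoc] .
  define h where "h = (\<lambda>a b. \<tau>0 $$ (a,b) - \<sigma> $$ (a,b))"
  define P where "P = (\<lambda>X. \<Sum>a<dB. \<Sum>b<dB. cnj (h a b) * X $$ (a,b))"
  have var: "Re (P \<tau>0) \<le> Re (P (E \<rho>))" if cE: "COV E" for E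
  proof -
    have Ec: "E \<rho> \<in> carrier_mat dB dB" using COVc[OF cE rhoc] .
    have "0 \<le> Re (\<Sum>a<dB. \<Sum>b<dB. cnj (h a b) * (E \<rho> $$ (a,b) - \<tau>0 $$ (a,b)))"
    proof (rule var_step)
      fix t :: real assume t: "0 < t" "t \<le> 1"
      define Et where "Et = (\<lambda>X. complex_of_real t \<cdot>\<^sub>m E X + complex_of_real (1-t) \<cdot>\<^sub>m E0 X)"
      have "COV Et" unfolding COV_def Et_def
        using comb_chan[of dA dB E E0 t] comb_cov[of dA dB E E0 G UA UB] cE COV0 t UB unfolding COV_def by auto
      then have "val E0 \<le> val Et" by (rule minE0)
      moreover have "val Et = (\<Sum>a<dB. \<Sum>b<dB. (cmod (h a b + complex_of_real t * (E \<rho> $$ (a,b) - \<tau>0 $$ (a,b))))\<^sup>2)"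
        unfolding val_def
      proof (intro sum.cong refl)
        fix a b assume ab: "a \<in> {..<dB}" "b \<in> {..<dB}"
        have eq: "Et \<rho> $$ (a,b) = complex_of_real t * E \<rho> $$ (a,b) + complex_of_real (1-t) * \<tau>0 $$ (a,b)"
          unfolding Et_def \<tau>0_def using ab carrier_matD[OF Ec] carrier_matD[OF t0c[unfolded \<tau>0_def]] by simp
        have "Et \<rho> $$ (a,b) - \<sigma> $$ (a,b) = h a b + complex_of_real t * (E \<rho> $$ (a,b) - \<tau>0 $$ (a,b))"
          unfolding h_def eq by (simp add: algebra_simps)
        then show "(cmod (Et \<rho> $$ (a,b) - \<sigma> $$ (a,b)))\<^sup>2 = (cmod (h a b + complex_of_real t * (E \<rho> $$ (a,b) - \<tau>0 $$ (a,b))))\<^sup>2"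
          by simp
      qed
      moreover have "val E0 = (\<Sum>a<dB. \<Sum>b<dB. (cmod (h a b))\<^sup>2)" unfolding val_def h_def \<tau>0_def by simp
      ultimately show "(\<Sum>a<dB. \<Sum>b<dB. (cmod (h a b))\<^sup>2) \<le> (\<Sum>a<dB. \<Sum>b<dB. (cmod (h a b + complex_of_real t * (E \<rho> $$ (a,b) - \<tau>0 $$ (a,b))))\<^sup>2)"
        by simp
    qed
    also have "(\<Sum>a<dB. \<Sum>b<dB. cnj (h a b) * (E \<rho> $$ (a,b) - \<tau>0 $$ (a,b))) = P (E \<rho>) - P \<tau>0"
      unfolding P_def by (simp add: sum_subtractf right_diff_distrib)
    finally show ?thesis by simp
  qed
  have dB0: "dB > 0"
  proof (rule ccontr)
    assume "\<not> dB > 0" then have "dB = 0" by simp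
    then have "mtrace \<sigma> = 0" using sigc unfolding mtrace_def by simp
    then show False using sig(2) by simp
  qed
  have trh: "(\<Sum>a<dB. h a a) = 0"
  proof -
    have "(\<Sum>a<dB. h a a) = mtrace \<tau>0 - mtrace \<sigma>"
      unfolding h_def mtrace_def using t0c sigc by (simp add: sum_subtractf)
    also have "\<dots> = 0" using COVtr[OF COV0] sig(2) unfolding \<tau>0_def by simp
    finally show ?thesis .
  qed
  define c where "c = 1 + (\<Sum>a<dB. \<Sum>b<dB. cmod (h a b))"
  have c1: "c \<ge> 1" unfolding c_def by (simp add: sum_nonneg)
  define K where "K = c * real dB"
  have K0: "K > 0" unfolding K_def using c1 dB0 by simp
  define \<eta> where "\<eta> = mat dB dB (\<lambda>(a,b). ((if a = b then complex_of_real c else 0) - h a b) / complex_of_real K)"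
  have etac: "\<eta> \<in> carrier_mat dB dB" unfolding \<eta>_def by simp
  have eta_ent: "\<eta> $$ (a,b) = ((if a = b then complex_of_real c else 0) - h a b) / complex_of_real K"
    if "a < dB" "b < dB" for a b
    unfolding \<eta>_def using that by simp
  have eta_state: "is_state dB \<eta>"
    unfolding is_state_def
  proof
    have "mtrace \<eta> = (\<Sum>a<dB. (complex_of_real c - h a a) / complex_of_real K)"
      unfolding mtrace_def using etac eta_ent by simp
    also have "\<dots> = (of_nat dB * complex_of_real c - (\<Sum>a<dB. h a a)) / complex_of_real K"
      by (simp add: sum_divide_distrib[symmetric] sum_subtractf)
    also have "\<dots> = 1" unfolding trh K_def using c1 dB0 by (simp add: field_simps)
    finally show "mtrace \<eta> = 1" .
    show "psd dB \<eta>"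
      unfolding psd_def
    proof (intro conjI ballI etac)
      fix v :: "complex vec" assume v: "v \<in> carrier_vec dB"
      define qH where "qH = (\<Sum>i<dB. \<Sum>j<dB. h i j * v $ j * cnj (v $ i))"
      define Nr where "Nr = (\<Sum>i<dB. (cmod (v $ i))\<^sup>2)"
      have qH: "qH = (\<tau>0 *\<^sub>v v) \<bullet>c v - (\<sigma> *\<^sub>v v) \<bullet>c v"
        unfolding qH_def qform[OF t0c v] qform[OF sigc v] h_def
        by (simp add: sum_subtractf left_diff_distrib)
      have p0: "psd dB \<tau>0" unfolding \<tau>0_def by (rule COVpsd[OF COV0])
      have imq: "Im qH = 0" unfolding qH using psdD[OF p0 v] psdD[OF sig(1) v] by simp
      have "cmod qH \<le> (\<Sum>i<dB. \<Sum>j<dB. cmod (h i j)) * Nr"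
        unfolding qH_def Nr_def by (rule qbound)
      also have "\<dots> \<le> c * Nr" unfolding c_def Nr_def by (intro mult_right_mono sum_nonneg) auto
      finally have req: "Re qH \<le> c * Nr" using complex_Re_le_cmod[of qH] by linarith
      have "(\<eta> *\<^sub>v v) \<bullet>c v = (\<Sum>i<dB. \<Sum>j<dB. ((if i = j then complex_of_real c * (v $ j * cnj (v $ i)) else 0)
            - h i j * v $ j * cnj (v $ i)) / complex_of_real K)"
        unfolding qform[OF etac v] by (intro sum.cong refl) (simp add: eta_ent field_simps)
      also have "\<dots> = (complex_of_real c * (\<Sum>i<dB. v $ i * cnj (v $ i)) - qH) / complex_of_real K"
        unfolding qH_def by (simp add: sum_divide_distrib[symmetric] sum_subtractf sum_distrib_left)
      also have "(\<Sum>i<dB. v $ i * cnj (v $ i)) = complex_of_real Nr"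
        unfolding Nr_def of_real_sum by (intro sum.cong refl) (rule complex_norm_square[symmetric])
      finally have qe: "(\<eta> *\<^sub>v v) \<bullet>c v = (complex_of_real (c * Nr) - qH) / complex_of_real K" by simp
      show "Im ((\<eta> *\<^sub>v v) \<bullet>c v) = 0" unfolding qe using imq by (simp add: Im_divide_of_real)
      show "Re ((\<eta> *\<^sub>v v) \<bullet>c v) \<ge> 0" unfolding qe using req K0 by (simp add: Re_divide_of_real)
    qed
  qed
  define \<tau>1 where "\<tau>1 = Efam \<eta> \<rho>"
  have COV1: "COV (Efam \<eta>)" unfolding COV_def using assms(6)[OF eta_state] .
  have t1c: "\<tau>1 \<in> carrier_mat dB dB" unfolding \<tau>1_def using COVc[OF COV1 rhoc] .
  have hsf: "hs_inner \<eta> X = (complex_of_real c * mtrace X - P X) / complex_of_real K" if X: "X \<in> carrier_mat dB dB" for X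
  proof -
    have "hs_inner \<eta> X = (\<Sum>a<dB. \<Sum>b<dB. ((if a = b then complex_of_real c * X $$ (a,b) else 0) - cnj (h a b) * X $$ (a,b)) / complex_of_real K)"
      unfolding hs_inner_formula[OF etac X] by (intro sum.cong refl) (simp add: eta_ent field_simps)
    also have "\<dots> = (complex_of_real c * (\<Sum>a<dB. X $$ (a,a)) - P X) / complex_of_real K"
      unfolding P_def by (simp add: sum_divide_distrib[symmetric] sum_subtractf sum_distrib_left)
    also have "(\<Sum>a<dB. X $$ (a,a)) = mtrace X" unfolding mtrace_def using X by simp
    finally show ?thesis .
  qed
  have "Re (hs_inner \<eta> \<tau>1) \<ge> Re (hs_inner \<eta> \<sigma>)" using assms(7)[OF eta_state] unfolding \<tau>1_def .
  then have "(c - Re (P \<tau>1)) / K \<ge> (c - Re (P \<sigma>)) / K"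
    unfolding hsf[OF t1c] hsf[OF sigc] using COVtr[OF COV1] sig(2) unfolding \<tau>1_def
    by (simp add: Re_divide_of_real)
  then have h1: "Re (P \<tau>1) \<le> Re (P \<sigma>)" using K0 by (simp add: divide_right_mono_neg field_simps)
  have h2: "Re (P \<tau>0) \<le> Re (P \<tau>1)" using var[OF COV1] unfolding \<tau>1_def .
  have h3: "Re (P \<tau>0) - Re (P \<sigma>) = (\<Sum>a<dB. \<Sum>b<dB. (cmod (h a b))\<^sup>2)"
  proof -
    have "P \<tau>0 - P \<sigma> = (\<Sum>a<dB. \<Sum>b<dB. cnj (h a b) * h a b)"
      unfolding P_def h_def by (simp add: sum_subtractf right_diff_distrib)
    also have "\<dots> = (\<Sum>a<dB. \<Sum>b<dB. complex_of_real ((cmod (h a b))\<^sup>2))"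
      by (simp add: cnj_mult_self)
    also have "\<dots> = complex_of_real (\<Sum>a<dB. \<Sum>b<dB. (cmod (h a b))\<^sup>2)"
      by (simp only: of_real_sum)
    finally have e: "P \<tau>0 - P \<sigma> = complex_of_real (\<Sum>a<dB. \<Sum>b<dB. (cmod (h a b))\<^sup>2)" .
    have "Re (P \<tau>0 - P \<sigma>) = (\<Sum>a<dB. \<Sum>b<dB. (cmod (h a b))\<^sup>2)" unfolding e by (rule Re_complex_of_real)
    then show ?thesis by simp
  qed
  have hs0: "(\<Sum>a<dB. \<Sum>b<dB. (cmod (h a b))\<^sup>2) = 0"
  proof -
    have "(\<Sum>a<dB. \<Sum>b<dB. (cmod (h a b))\<^sup>2) \<le> 0" using h1 h2 h3 by linarith
    moreover have "(\<Sum>a<dB. \<Sum>b<dB. (cmod (h a b))\<^sup>2) \<ge> 0" by (intro sum_nonneg) auto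
    ultimately show ?thesis by linarith
  qed
  have hz: "h a b = 0" if "a < dB" "b < dB" for a b
  proof -
    have "\<forall>a\<in>{..<dB}. (\<Sum>b<dB. (cmod (h a b))\<^sup>2) = 0"
      using hs0 by (subst sum_nonneg_eq_0_iff[symmetric]) (auto intro: sum_nonneg)
    then have "(\<Sum>b<dB. (cmod (h a b))\<^sup>2) = 0" using that by auto
    then have "\<forall>b\<in>{..<dB}. (cmod (h a b))\<^sup>2 = 0"
      by (subst sum_nonneg_eq_0_iff[symmetric]) auto
    then show ?thesis using that by auto
  qed
  have "E0 \<rho> = \<sigma>"
  proof (rule eq_matI)
    fix a b assume "a < dim_row \<sigma>" "b < dim_col \<sigma>"
    then show "E0 \<rho> $$ (a,b) = \<sigma> $$ (a,b)" using hz[of a b] sigc unfolding h_def \<tau>0_def by auto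
  qed (use t0c sigc \<tau>0_def in auto)
  then show ?thesis using E0ch E0cov by blast
qed

end
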